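(* Let $\mathbf{Q}^\star,\mathbf{Q},\mathbf{Q}_r,\mathbf{H}$ be as in the context, let $\lambda_j^\star$ be the $j$-th eigenvalue of $\mathbf{Q}^\star$, and $\delta^\star=\min\{\min_{j\in[r-1]}|\lambda_j^\star-\lambda_{j+1}^\star|,\ \lambda_r^\star\}$. If $\mathbf{H}$ is Hermitian, then $$\|\mathbf{Q}^\star-\mathbf{Q}_r\|_2\le O\!\left(\lambda_{r+1}^\star+\frac{\lambda_1^\star}{\delta^\star}\|\mathbf{H}\|_2\right).$$
   Context: $\mathbf{Q}^\star\in\mathbb{C}^{n\times n}$ is Hermitian positive semi-definite of rank $r^\star$ with eigenvalues $\lambda_1^\star\ge\lambda_2^\star\ge\dots\ge 0$ (zero beyond the rank). $\mathbf{H}\in\mathbb{C}^{n\times n}$, $\mathbf{Q}=\mathbf{Q}^\star+\mathbf{H}$, and $\mathbf{Q}_r=\mathbf{V}_r\boldsymbol{\Sigma}_r\mathbf{V}_r^\dagger$ with $\boldsymbol{\Sigma}_r$ the top-$r$ singular values of $\mathbf{Q}$ and $\mathbf{V}_r$ the corresponding left singular vectors. $\|\cdot\|_2$ is the spectral norm; $O(\cdot)$ hides an absolute constant. *)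

theory Defs
  imports "Jordan_Normal_Form.Matrix"
begin

definition adjoint_mat :: "complex mat \<Rightarrow> complex mat" where
  "adjoint_mat A = mat (dim_col A) (dim_row A) (\<lambda>(i,j). cnj (A $$ (j,i)))"

definition hermitian_mat :: "complex mat \<Rightarrow> bool" where
  "hermitian_mat A \<longleftrightarrow> A \<in> carrier_mat (dim_row A) (dim_row A) \<and> adjoint_mat A = A"

definition unitary_mat :: "nat \<Rightarrow> complex mat \<Rightarrow> bool" where
  "unitary_mat n U \<longleftrightarrow> U \<in> carrier_mat n n \<and> adjoint_mat U * U = 1\<^sub>m n \<and> U * adjoint_mat U = 1\<^sub>m n"

definition vnorm :: "complex vec \<Rightarrow> real" where
  "vnorm v = sqrt (\<Sum>i<dim_vec v. (cmod (v $ i))^2)"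

definition spec_norm :: "complex mat \<Rightarrow> real" where
  "spec_norm A = Sup {vnorm (A *\<^sub>v x) | x. x \<in> carrier_vec (dim_col A) \<and> vnorm x = 1}"

text \<open>Eigenvalues (1-indexed, \<open>lam 1 \<ge> lam 2 \<ge> \<dots> \<ge> lam n \<ge> 0\<close>, and \<open>lam j = 0\<close> for
  \<open>j > n\<close>) of a Hermitian PSD matrix, given through a unitary eigendecomposition
  \<open>Q = U diag(lam 1, \<dots>, lam n) U\<^sup>\<dagger>\<close>.\<close>
definition psd_ordered_eigendecomp :: "nat \<Rightarrow> complex mat \<Rightarrow> complex mat \<Rightarrow> (nat \<Rightarrow> real) \<Rightarrow> bool" where
  "psd_ordered_eigendecomp n Q U lam \<longleftrightarrow>
     unitary_mat n U \<and>
     Q = U * mat_diag n (\<lambda>i. complex_of_real (lam (i+1))) * adjoint_mat U \<and>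
     (\<forall>j k. 1 \<le> j \<longrightarrow> j \<le> k \<longrightarrow> lam k \<le> lam j) \<and>
     (\<forall>j. lam j \<ge> 0) \<and> (\<forall>j. j > n \<longrightarrow> lam j = 0)"

text \<open>Singular value decomposition \<open>Q = V diag(sig 0, \<dots>, sig (n-1)) W\<^sup>\<dagger>\<close> with singular
  values sorted nonincreasingly (0-indexed here); \<open>V\<close> holds the left singular vectors.\<close>
definition ordered_svd :: "nat \<Rightarrow> complex mat \<Rightarrow> complex mat \<Rightarrow> (nat \<Rightarrow> real) \<Rightarrow> complex mat \<Rightarrow> bool" where
  "ordered_svd n Q V sig W \<longleftrightarrow>
     unitary_mat n V \<and> unitary_mat n W \<and>
     Q = V * mat_diag n (\<lambda>i. complex_of_real (sig i)) * adjoint_mat W \<and>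
     (\<forall>i j. i \<le> j \<longrightarrow> j < n \<longrightarrow> sig j \<le> sig i) \<and> (\<forall>i<n. sig i \<ge> 0)"

definition trunc_rank :: "nat \<Rightarrow> nat \<Rightarrow> complex mat \<Rightarrow> (nat \<Rightarrow> real) \<Rightarrow> complex mat" where
  "trunc_rank n r V sig =
     (let Vr = mat n r (\<lambda>(i,j). V $$ (i,j)) in
      Vr * mat_diag r (\<lambda>i. complex_of_real (sig i)) * adjoint_mat Vr)"

definition eig_gap :: "(nat \<Rightarrow> real) \<Rightarrow> nat \<Rightarrow> real" where
  "eig_gap lam r = Min ({\<bar>lam j - lam (j+1)\<bar> | j. 1 \<le> j \<and> j \<le> r - 1} \<union> {lam r})"

end

theory Submission
  imports Defs "HOL-Analysis.L2_Norm" "Jordan_Normal_Form.Determinant"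
begin


lemma vnorm_L2: "vnorm v = L2_set (\<lambda>i. cmod (v$i)) {..<dim_vec v}"
  unfolding vnorm_def L2_set_def by simp

lemma vnorm_nonneg[simp]: "vnorm v \<ge> 0"
  unfolding vnorm_L2 by simp

lemma vnorm_le_pointwise:
  assumes "dim_vec x = dim_vec y" "c \<ge> 0" "\<And>i. i < dim_vec y \<Longrightarrow> cmod (x$i) \<le> c * cmod (y$i)"
  shows "vnorm x \<le> c * vnorm y"
proof -
  have "vnorm x = L2_set (\<lambda>i. cmod (x$i)) {..<dim_vec y}" using assms(1) vnorm_L2 by simp
  also have "\<dots> \<le> L2_set (\<lambda>i. c * cmod (y$i)) {..<dim_vec y}"
    by (rule L2_set_mono, insert assms, auto)
  also have "\<dots> = c * vnorm y" unfolding vnorm_L2 by (rule L2_set_right_distrib[symmetric], fact)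
  finally show ?thesis .
qed

lemma vnorm_ge_pointwise:
  assumes "dim_vec x = dim_vec y" "c \<ge> 0" "\<And>i. i < dim_vec y \<Longrightarrow> c * cmod (y$i) \<le> cmod (x$i)"
  shows "c * vnorm y \<le> vnorm x"
proof -
  have "c * vnorm y = L2_set (\<lambda>i. c * cmod (y$i)) {..<dim_vec y}"
    unfolding vnorm_L2 by (rule L2_set_right_distrib, fact)
  also have "\<dots> \<le> L2_set (\<lambda>i. cmod (x$i)) {..<dim_vec y}"
    by (rule L2_set_mono, insert assms, auto)
  also have "\<dots> = vnorm x" using assms(1) vnorm_L2 by simp
  finally show ?thesis .
qed

lemma vnorm_smult: "vnorm (k \<cdot>\<^sub>v x) = cmod k * vnorm x"
proof (rule antisym)
  show "vnorm (k \<cdot>\<^sub>v x) \<le> cmod k * vnorm x"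
    by (rule vnorm_le_pointwise, auto simp: norm_mult)
  show "cmod k * vnorm x \<le> vnorm (k \<cdot>\<^sub>v x)"
    by (rule vnorm_ge_pointwise, auto simp: norm_mult)
qed

lemma vnorm_add:
  assumes "dim_vec x = dim_vec y"
  shows "vnorm (x + y) \<le> vnorm x + vnorm y"
proof -
  have "vnorm (x + y) = L2_set (\<lambda>i. cmod ((x + y)$i)) {..<dim_vec y}" unfolding vnorm_L2 by simp
  also have "\<dots> \<le> L2_set (\<lambda>i. cmod (x$i) + cmod (y$i)) {..<dim_vec y}"
    using assms by (intro L2_set_mono, auto intro: norm_triangle_ineq)
  also have "\<dots> \<le> vnorm x + vnorm y"
    unfolding vnorm_L2 using assms by (simp add: L2_set_triangle_ineq)
  finally show ?thesis .
qed

lemma vnorm_diff: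
  assumes "dim_vec x = dim_vec y"
  shows "vnorm (x - y) \<le> vnorm x + vnorm y"
proof -
  have "vnorm (x - y) = L2_set (\<lambda>i. cmod ((x - y)$i)) {..<dim_vec y}" unfolding vnorm_L2 by simp
  also have "\<dots> \<le> L2_set (\<lambda>i. cmod (x$i) + cmod (y$i)) {..<dim_vec y}"
    using assms by (intro L2_set_mono, auto intro: norm_triangle_ineq4)
  also have "\<dots> \<le> vnorm x + vnorm y"
    unfolding vnorm_L2 using assms by (simp add: L2_set_triangle_ineq)
  finally show ?thesis .
qed

lemma vnorm_eq_0_iff: "vnorm x = 0 \<longleftrightarrow> x = 0\<^sub>v (dim_vec x)"
proof -
  have "vnorm x = 0 \<longleftrightarrow> (\<forall>i<dim_vec x. x $ i = 0)"
    unfolding vnorm_L2 by (subst L2_set_eq_0_iff, auto)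
  also have "\<dots> \<longleftrightarrow> x = 0\<^sub>v (dim_vec x)" by (auto intro!: eq_vecI, metis index_zero_vec(1))
  finally show ?thesis .
qed

lemma vnorm_unit_vec: "i < n \<Longrightarrow> vnorm (unit_vec n i :: complex vec) = 1"
proof -
  assume i: "i < n"
  have "(\<Sum>j<n. (cmod (unit_vec n i $ j :: complex))\<^sup>2) = (\<Sum>j<n. if j = i then 1 else 0)"
    using i by (intro sum.cong, auto)
  also have "\<dots> = 1" using i by simp
  finally show ?thesis unfolding vnorm_def by simp
qed

lemma vnorm_sq: "complex_of_real ((vnorm x)^2) = (\<Sum>i<dim_vec x. x$i * cnj (x$i))"
proof -
  have "(vnorm x)^2 = (\<Sum>i<dim_vec x. (cmod (x$i))^2)" unfolding vnorm_def by (simp add: sum_nonneg)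
  hence "complex_of_real ((vnorm x)^2) = (\<Sum>i<dim_vec x. complex_of_real ((cmod (x$i))^2))" by simp
  also have "\<dots> = (\<Sum>i<dim_vec x. x$i * cnj (x$i))" by (intro sum.cong refl, simp add: complex_norm_square[symmetric])
  finally show ?thesis .
qed

lemma cmod_le_vnorm: "i < dim_vec x \<Longrightarrow> cmod (x $ i) \<le> vnorm x"
  unfolding vnorm_L2 by (rule member_le_L2_set, auto)



definition ip :: "complex vec \<Rightarrow> complex vec \<Rightarrow> complex" where
  "ip x y = (\<Sum>i<dim_vec x. x$i * cnj (y$i))"

lemma mult_mat_vec_sum: "i < dim_row A \<Longrightarrow> dim_vec x = dim_col A \<Longrightarrow>
   (A *\<^sub>v x) $ i = (\<Sum>j<dim_col A. A $$ (i,j) * x $ j)"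
  by (simp add: scalar_prod_def atLeast0LessThan)

lemma mult_mat_sum: "i < dim_row A \<Longrightarrow> j < dim_col B \<Longrightarrow> dim_col A = dim_row B \<Longrightarrow>
   (A * B) $$ (i,j) = (\<Sum>k<dim_col A. A $$ (i,k) * B $$ (k,j))"
  by (simp add: scalar_prod_def atLeast0LessThan)

lemma adjoint_carrier[simp]: "adjoint_mat A \<in> carrier_mat (dim_col A) (dim_row A)"
  unfolding adjoint_mat_def by simp

lemma adjoint_dims[simp]: "dim_row (adjoint_mat A) = dim_col A" "dim_col (adjoint_mat A) = dim_row A"
  unfolding adjoint_mat_def by simp_all

lemma adjoint_index[simp]: "i < dim_col A \<Longrightarrow> j < dim_row A \<Longrightarrow> adjoint_mat A $$ (i,j) = cnj (A $$ (j,i))"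
  unfolding adjoint_mat_def by simp

lemma adjoint_adjoint[simp]: "adjoint_mat (adjoint_mat A) = A"
  by (rule eq_matI, auto)

lemma adjoint_add: "A \<in> carrier_mat n m \<Longrightarrow> B \<in> carrier_mat n m \<Longrightarrow>
  adjoint_mat (A + B) = adjoint_mat A + adjoint_mat B"
  by (rule eq_matI, auto)

lemma adjoint_mult: assumes "A \<in> carrier_mat n k" "B \<in> carrier_mat k m"
  shows "adjoint_mat (A * B) = adjoint_mat B * adjoint_mat A"
proof (rule eq_matI)
  fix i j assume ij: "i < dim_row (adjoint_mat B * adjoint_mat A)" "j < dim_col (adjoint_mat B * adjoint_mat A)"
  hence i: "i < m" and j: "j < n" using assms by auto
  have "adjoint_mat (A * B) $$ (i,j) = cnj (\<Sum>l<k. A $$ (j,l) * B $$ (l,i))"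
    using assms i j by (simp add: scalar_prod_def atLeast0LessThan)
  also have "\<dots> = (\<Sum>l<k. cnj (B $$ (l,i)) * cnj (A $$ (j,l)))" by (simp add: mult.commute)
  also have "\<dots> = (adjoint_mat B * adjoint_mat A) $$ (i,j)"
    using assms i j by (subst mult_mat_sum, auto)
  finally show "adjoint_mat (A * B) $$ (i,j) = (adjoint_mat B * adjoint_mat A) $$ (i,j)" .
qed (insert assms, auto)

lemma adjoint_diag_real: "adjoint_mat (mat_diag n (\<lambda>i. complex_of_real (f i))) = mat_diag n (\<lambda>i. complex_of_real (f i))"
  by (rule eq_matI, auto simp: mat_diag_def)

lemma adj_ip: assumes A: "A \<in> carrier_mat n m" and x: "x \<in> carrier_vec m" and y: "y \<in> carrier_vec n"
  shows "ip (A *\<^sub>v x) y = ip x (adjoint_mat A *\<^sub>v y)"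
proof -
  have "ip (A *\<^sub>v x) y = (\<Sum>i<n. \<Sum>j<m. A$$(i,j) * x$j * cnj (y$i))"
    unfolding ip_def using A x y by (auto simp: scalar_prod_def atLeast0LessThan sum_distrib_right intro!: sum.cong)
  also have "\<dots> = (\<Sum>j<m. \<Sum>i<n. A$$(i,j) * x$j * cnj (y$i))" by (rule sum.swap)
  also have "\<dots> = ip x (adjoint_mat A *\<^sub>v y)"
    unfolding ip_def using A x y by (auto simp: scalar_prod_def atLeast0LessThan sum_distrib_left intro!: sum.cong)
  finally show ?thesis .
qed

lemma vnorm_ip: "complex_of_real ((vnorm x)^2) = ip x x"
  unfolding ip_def by (rule vnorm_sq)

lemma unitary_adjoint: "unitary_mat n U \<Longrightarrow> unitary_mat n (adjoint_mat U)"
  unfolding unitary_mat_def by auto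

lemma unitary_carrier: "unitary_mat n U \<Longrightarrow> U \<in> carrier_mat n n"
  unfolding unitary_mat_def by auto

lemma unitary_norm: assumes U: "unitary_mat n U" and x: "x \<in> carrier_vec n"
  shows "vnorm (U *\<^sub>v x) = vnorm x"
proof -
  have Uc: "U \<in> carrier_mat n n" and UU: "adjoint_mat U * U = 1\<^sub>m n" using U unfolding unitary_mat_def by auto
  have "complex_of_real ((vnorm (U *\<^sub>v x))^2) = ip (U *\<^sub>v x) (U *\<^sub>v x)" by (rule vnorm_ip)
  also have "\<dots> = ip x (adjoint_mat U *\<^sub>v (U *\<^sub>v x))" using Uc x by (intro adj_ip, auto)
  also have "adjoint_mat U *\<^sub>v (U *\<^sub>v x) = (adjoint_mat U * U) *\<^sub>v x" using Uc x
    by (subst assoc_mult_mat_vec, auto)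
  also have "\<dots> = x" using UU x by simp
  also have "ip x x = complex_of_real ((vnorm x)^2)" by (rule vnorm_ip[symmetric])
  finally have "(vnorm (U *\<^sub>v x))^2 = (vnorm x)^2" using of_real_eq_iff by blast
  thus ?thesis by (simp add: power2_eq_iff_nonneg)
qed

lemma unitary_norm_adj: "unitary_mat n U \<Longrightarrow> x \<in> carrier_vec n \<Longrightarrow> vnorm (adjoint_mat U *\<^sub>v x) = vnorm x"
  by (rule unitary_norm[OF unitary_adjoint])



lemma spec_norm_bdd: assumes A: "A \<in> carrier_mat n n"
  shows "bdd_above {vnorm (A *\<^sub>v x) | x. x \<in> carrier_vec (dim_col A) \<and> vnorm x = 1}"
proof (rule bdd_aboveI)
  fix t assume "t \<in> {vnorm (A *\<^sub>v x) | x. x \<in> carrier_vec (dim_col A) \<and> vnorm x = 1}"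
  then obtain x where x: "x \<in> carrier_vec n" "vnorm x = 1" and t: "t = vnorm (A *\<^sub>v x)" using A by auto
  have "t \<le> (\<Sum>i<n. \<bar>cmod ((A *\<^sub>v x) $ i)\<bar>)" unfolding t vnorm_L2 using A
    L2_set_le_sum_abs[of "\<lambda>i. cmod ((A *\<^sub>v x) $ i)" "{..<n}"] by simp
  also have "\<dots> \<le> (\<Sum>i<n. \<Sum>j<n. cmod (A $$ (i,j)))"
  proof (rule sum_mono)
    fix i assume i: "i \<in> {..<n}"
    have "\<bar>cmod ((A *\<^sub>v x) $ i)\<bar> = cmod (\<Sum>j<n. A $$ (i,j) * x $ j)"
      using A x i by (simp add: scalar_prod_def atLeast0LessThan)
    also have "\<dots> \<le> (\<Sum>j<n. cmod (A $$ (i,j) * x $ j))" by (rule norm_sum)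
    also have "\<dots> \<le> (\<Sum>j<n. cmod (A $$ (i,j)))"
    proof (rule sum_mono)
      fix j assume j: "j \<in> {..<n}"
      have "cmod (x $ j) \<le> 1" using cmod_le_vnorm[of j x] x j by auto
      thus "cmod (A $$ (i,j) * x $ j) \<le> cmod (A $$ (i,j))"
        by (simp add: norm_mult mult_left_le)
    qed
    finally show "\<bar>cmod ((A *\<^sub>v x) $ i)\<bar> \<le> (\<Sum>j<n. cmod (A $$ (i,j)))" .
  qed
  finally show "t \<le> (\<Sum>i<n. \<Sum>j<n. cmod (A $$ (i,j)))" .
qed

lemma spec_norm_vec: assumes A: "A \<in> carrier_mat n n" and x: "x \<in> carrier_vec n"
  shows "vnorm (A *\<^sub>v x) \<le> spec_norm A * vnorm x"
proof (cases "vnorm x = 0")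
  case True
  hence "x = 0\<^sub>v n" using vnorm_eq_0_iff x by auto
  hence "A *\<^sub>v x = 0\<^sub>v n" using A by auto
  hence "vnorm (A *\<^sub>v x) = 0" using vnorm_eq_0_iff by auto
  thus ?thesis using True by simp
next
  case False
  hence pos: "vnorm x > 0" using vnorm_nonneg[of x] by linarith
  define y where "y = complex_of_real (1 / vnorm x) \<cdot>\<^sub>v x"
  have y: "y \<in> carrier_vec n" using x unfolding y_def by auto
  have vy: "vnorm y = 1" unfolding y_def vnorm_smult using pos by (simp add: norm_divide)
  have "vnorm (A *\<^sub>v y) \<le> spec_norm A" unfolding spec_norm_def
    by (rule cSup_upper[OF _ spec_norm_bdd[OF A]], insert y vy A, auto)
  moreover have "A *\<^sub>v y = complex_of_real (1 / vnorm x) \<cdot>\<^sub>v (A *\<^sub>v x)"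
    unfolding y_def using A x by (rule mult_mat_vec)
  hence "vnorm (A *\<^sub>v y) = vnorm (A *\<^sub>v x) / vnorm x" using pos by (simp add: vnorm_smult norm_divide)
  ultimately have "vnorm (A *\<^sub>v x) / vnorm x \<le> spec_norm A" by simp
  thus ?thesis using pos by (simp add: divide_le_eq)
qed

lemma spec_norm_le: assumes A: "A \<in> carrier_mat n n" and n: "0 < n"
  and b: "\<And>x. x \<in> carrier_vec n \<Longrightarrow> vnorm x = 1 \<Longrightarrow> vnorm (A *\<^sub>v x) \<le> c"
  shows "spec_norm A \<le> c"
  unfolding spec_norm_def
proof (rule cSup_least)
  show "{vnorm (A *\<^sub>v x) |x. x \<in> carrier_vec (dim_col A) \<and> vnorm x = 1} \<noteq> {}"
    using A n vnorm_unit_vec[OF n] by (auto intro!: exI[of _ "unit_vec n 0"])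
qed (insert A b, auto)

lemma spec_norm_nonneg: assumes A: "A \<in> carrier_mat n n" and n: "0 < n"
  shows "spec_norm A \<ge> 0"
proof -
  have "vnorm (A *\<^sub>v unit_vec n 0) \<le> spec_norm A * vnorm (unit_vec n 0 :: complex vec)"
    by (rule spec_norm_vec[OF A], simp)
  thus ?thesis using vnorm_unit_vec[OF n] by (metis mult_1_right order_trans vnorm_nonneg)
qed

lemma diag_mult_vec: "b \<in> carrier_vec n \<Longrightarrow> mat_diag n f *\<^sub>v b = vec n (\<lambda>k. f k * b $ k)"
proof (rule eq_vecI)
  fix i assume b: "b \<in> carrier_vec n" and i: "i < dim_vec (vec n (\<lambda>k. f k * b $ k))"
  hence i: "i < n" by simp
  have "(mat_diag n f *\<^sub>v b) $ i = (\<Sum>j<n. (if i = j then f j else 0) * b $ j)"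
    using b i by (simp add: mat_diag_def scalar_prod_def atLeast0LessThan)
  also have "\<dots> = (\<Sum>j<n. if j = i then f i * b $ i else 0)" by (rule sum.cong, auto)
  also have "\<dots> = f i * b $ i" using i by simp
  finally show "(mat_diag n f *\<^sub>v b) $ i = vec n (\<lambda>k. f k * b $ k) $ i" using i by simp
qed (auto simp: mat_diag_def)

lemma exists_kernel: assumes B: "(B :: complex mat) \<in> carrier_mat n n" and qp: "q < p" and pn: "p \<le> n"
  shows "\<exists>a \<in> carrier_vec n. a \<noteq> 0\<^sub>v n \<and> (\<forall>k. p \<le> k \<longrightarrow> k < n \<longrightarrow> a $ k = 0) \<and> (\<forall>k<q. (B *\<^sub>v a) $ k = 0)"
proof -
  define c where "c = (\<lambda>i. vec p (\<lambda>j. if i < q then B $$ (i,j) else 0) :: complex vec)"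
  define M where "M = mat\<^sub>r p p (\<lambda>i. if i = q then 0\<^sub>v p else c i)"
  have "det M = 0" unfolding M_def by (rule det_row_0[OF qp], auto simp: c_def)
  then obtain v where v: "v \<in> carrier_vec p" "v \<noteq> 0\<^sub>v p" "M *\<^sub>v v = 0\<^sub>v p"
    using det_0_iff_vec_prod_zero_field[of M p] unfolding M_def by auto
  define a where "a = vec n (\<lambda>j. if j < p then v $ j else 0)"
  have a: "a \<in> carrier_vec n" unfolding a_def by simp
  obtain j where j: "j < p" "v $ j \<noteq> 0" using v(1,2) by (metis carrier_vecD eq_vecI index_zero_vec(1,2))
  have "a $ j \<noteq> 0" using j pn unfolding a_def by simp
  hence a0: "a \<noteq> 0\<^sub>v n" using j pn by auto
  have supp: "\<forall>k. p \<le> k \<longrightarrow> k < n \<longrightarrow> a $ k = 0" unfolding a_def by simp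
  have ker: "(B *\<^sub>v a) $ k = 0" if k: "k < q" for k
  proof -
    have kp: "k < p" using k qp by simp
    have "(B *\<^sub>v a) $ k = (\<Sum>j<n. B $$ (k,j) * a $ j)"
      using B a k qp pn by (simp add: scalar_prod_def atLeast0LessThan)
    also have "\<dots> = (\<Sum>j<p. B $$ (k,j) * v $ j)"
      by (rule sum.mono_neutral_cong_right, insert pn, auto simp: a_def)
    also have "\<dots> = (M *\<^sub>v v) $ k"
      using kp k v(1) by (simp add: M_def c_def scalar_prod_def atLeast0LessThan)
    also have "\<dots> = 0" using v(3) kp by simp
    finally show ?thesis .
  qed
  show ?thesis using a a0 supp ker by blast
qed



lemma mat_unit_col: "A \<in> carrier_mat n n \<Longrightarrow> i < n \<Longrightarrow> k < n \<Longrightarrow> (A *\<^sub>v unit_vec n i) $ k = (A $$ (k,i) :: complex)"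
proof -
  assume A: "A \<in> carrier_mat n n" and i: "i < n" and k: "k < n"
  have "(A *\<^sub>v unit_vec n i) $ k = (\<Sum>j<n. A $$ (k,j) * (if j = i then 1 else 0))"
    using A i k by (simp add: scalar_prod_def atLeast0LessThan)
  also have "\<dots> = (\<Sum>j<n. if j = i then A $$ (k,i) else 0)" by (rule sum.cong, auto)
  also have "\<dots> = A $$ (k,i)" using i by simp
  finally show ?thesis .
qed

lemma diag_unit: "i < n \<Longrightarrow> mat_diag n f *\<^sub>v unit_vec n i = (f i :: complex) \<cdot>\<^sub>v unit_vec n i"
  by (subst diag_mult_vec, simp, rule eq_vecI, auto)

lemma three_apply: "A \<in> carrier_mat n n \<Longrightarrow> S \<in> carrier_mat n n \<Longrightarrow> B \<in> carrier_mat n n \<Longrightarrow> x \<in> carrier_vec n \<Longrightarrow>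
  (A * S * adjoint_mat B) *\<^sub>v x = A *\<^sub>v (S *\<^sub>v (adjoint_mat B *\<^sub>v x))"
proof -
  assume A: "A \<in> carrier_mat n n" and S: "S \<in> carrier_mat n n" and B: "B \<in> carrier_mat n n" and x: "x \<in> carrier_vec n"
  have aB: "adjoint_mat B \<in> carrier_mat n n" using B adjoint_carrier[of B] by auto
  have "(A * S * adjoint_mat B) *\<^sub>v x = (A * S) *\<^sub>v (adjoint_mat B *\<^sub>v x)"
    using A S aB x by (intro assoc_mult_mat_vec, auto)
  also have "\<dots> = A *\<^sub>v (S *\<^sub>v (adjoint_mat B *\<^sub>v x))"
    using A S aB x by (intro assoc_mult_mat_vec, auto)
  finally show ?thesis .
qed

lemma unitary_inv1: "unitary_mat n W \<Longrightarrow> a \<in> carrier_vec n \<Longrightarrow> adjoint_mat W *\<^sub>v (W *\<^sub>v a) = a"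
proof -
  assume U: "unitary_mat n W" and a: "a \<in> carrier_vec n"
  have Wc: "W \<in> carrier_mat n n" and WW: "adjoint_mat W * W = 1\<^sub>m n" using U unfolding unitary_mat_def by auto
  have "adjoint_mat W *\<^sub>v (W *\<^sub>v a) = (adjoint_mat W * W) *\<^sub>v a" using Wc a
    by (subst assoc_mult_mat_vec, auto)
  thus ?thesis using WW a by simp
qed

lemma unitary_inv2: "unitary_mat n W \<Longrightarrow> a \<in> carrier_vec n \<Longrightarrow> W *\<^sub>v (adjoint_mat W *\<^sub>v a) = a"
  using unitary_inv1[OF unitary_adjoint] by fastforce

lemma vnorm_rev: assumes "dim_vec x = dim_vec y" shows "vnorm x \<le> vnorm (x + y) + vnorm y"
proof -
  have "x = (x + y) - y" using assms by (intro eq_vecI, auto)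
  hence "vnorm x = vnorm ((x + y) - y)" by simp
  also have "\<dots> \<le> vnorm (x + y) + vnorm y" using assms by (intro vnorm_diff, simp)
  finally show ?thesis .
qed

lemma trunc_eq: assumes V: "V \<in> carrier_mat n n" and X: "X \<in> carrier_mat n n" and rn: "r \<le> n"
  and eq: "\<And>j b. j < r \<Longrightarrow> b < n \<Longrightarrow> X $$ (b,j) = V $$ (b,j)"
  shows "trunc_rank n r V sig = V * mat_diag n (\<lambda>i. if i < r then complex_of_real (sig i) else 0) * adjoint_mat X"
proof -
  define Vr where "Vr = mat n r (\<lambda>(i,j). V $$ (i,j))"
  have Vr: "Vr \<in> carrier_mat n r" unfolding Vr_def by simp
  have t: "trunc_rank n r V sig = Vr * mat_diag r (\<lambda>i. complex_of_real (sig i)) * adjoint_mat Vr"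
    unfolding trunc_rank_def Vr_def Let_def by simp
  show ?thesis unfolding t
  proof (rule eq_matI)
    fix a b assume ab: "a < dim_row (V * mat_diag n (\<lambda>i. if i < r then complex_of_real (sig i) else 0) * adjoint_mat X)"
      "b < dim_col (V * mat_diag n (\<lambda>i. if i < r then complex_of_real (sig i) else 0) * adjoint_mat X)"
    hence a: "a < n" and b: "b < n" using V X by auto
    have "(Vr * mat_diag r (\<lambda>i. complex_of_real (sig i)) * adjoint_mat Vr) $$ (a,b)
      = (\<Sum>j<r. V $$ (a,j) * complex_of_real (sig j) * cnj (V $$ (b,j)))"
      unfolding mat_diag_mult_right[OF Vr] using a b Vr rn by (simp add: scalar_prod_def atLeast0LessThan Vr_def)
    also have "\<dots> = (\<Sum>j<n. V $$ (a,j) * (if j < r then complex_of_real (sig j) else 0) * cnj (X $$ (b,j)))"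
      by (rule sum.mono_neutral_cong_left, insert rn b eq, auto)
    also have "\<dots> = (V * mat_diag n (\<lambda>i. if i < r then complex_of_real (sig i) else 0) * adjoint_mat X) $$ (a,b)"
      using a b V X by (simp add: mat_diag_mult_right[OF V] scalar_prod_def atLeast0LessThan)
    finally show "(Vr * mat_diag r (\<lambda>i. complex_of_real (sig i)) * adjoint_mat Vr) $$ (a,b)
      = (V * mat_diag n (\<lambda>i. if i < r then complex_of_real (sig i) else 0) * adjoint_mat X) $$ (a,b)" .
  qed (insert V X Vr, auto)
qed

lemma adj_triple: "A \<in> carrier_mat n n \<Longrightarrow> B \<in> carrier_mat n n \<Longrightarrow> C \<in> carrier_mat n n \<Longrightarrow>
  adjoint_mat (A * B * C) = adjoint_mat C * adjoint_mat B * adjoint_mat A"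
proof -
  assume A: "A \<in> carrier_mat n n" and B: "B \<in> carrier_mat n n" and C: "C \<in> carrier_mat n n"
  have "adjoint_mat (A * B * C) = adjoint_mat C * adjoint_mat (A * B)"
    using A B C by (intro adjoint_mult, auto)
  also have "\<dots> = adjoint_mat C * (adjoint_mat B * adjoint_mat A)" using A B by (simp add: adjoint_mult)
  also have "\<dots> = adjoint_mat C * adjoint_mat B * adjoint_mat A"
    using A B C adjoint_carrier[of A] adjoint_carrier[of B] adjoint_carrier[of C]
    by (intro assoc_mult_mat[symmetric], auto)
  finally show ?thesis .
qed



lemma vnorm_uminus: "vnorm (- x) = vnorm x"
proof (rule antisym)
  show "vnorm (- x) \<le> vnorm x" by (rule vnorm_le_pointwise[where c=1, simplified], auto)
  show "vnorm x \<le> vnorm (- x)" by (rule vnorm_ge_pointwise[where c=1, simplified], auto)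
qed

lemma alg_helper: assumes q1: "(q::complex) = a + b" and q2: "q = s*w - s*v" and yy: "y = v - w"
  shows "a + s*y = -b"
proof -
  have "a + s*y = a - (s*w - s*v)" unfolding yy by (simp add: right_diff_distrib)
  also have "\<dots> = a - q" using q2 by simp
  also have "\<dots> = -b" using q1 by simp
  finally show ?thesis .
qed

lemma core:
  fixes Qs H U V W :: "complex mat" and lam sig :: "nat \<Rightarrow> real"
  assumes Qs: "Qs \<in> carrier_mat n n" and Hc: "H \<in> carrier_mat n n"
    and eig: "psd_ordered_eigendecomp n Qs U lam" and herm: "hermitian_mat H"
    and svd: "ordered_svd n (Qs + H) V sig W" and r1: "1 \<le> r" and rn: "r \<le> n"
    and gap: "eig_gap lam r > 0"
  shows "spec_norm (Qs - trunc_rank n r V sig) \<le> 8 * (lam (r+1) + lam 1 / eig_gap lam r * spec_norm H)"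
proof -
  define L where "L = mat_diag n (\<lambda>i. complex_of_real (lam (i+1)))"
  define S where "S = mat_diag n (\<lambda>i. complex_of_real (sig i))"
  define Sr where "Sr = mat_diag n (\<lambda>i. if i < r then complex_of_real (sig i) else 0)"
  define Q where "Q = Qs + H"
  define h where "h = spec_norm H"
  define \<delta> where "\<delta> = eig_gap lam r"
  define Qr where "Qr = trunc_rank n r V sig"
  have n0: "0 < n" using r1 rn by simp
  have U: "unitary_mat n U" and QsU: "Qs = U * L * adjoint_mat U"
    and lmono: "\<And>j k. 1 \<le> j \<Longrightarrow> j \<le> k \<Longrightarrow> lam k \<le> lam j" and lpos: "\<And>j. lam j \<ge> 0"
    using eig unfolding psd_ordered_eigendecomp_def L_def by auto
  have V: "unitary_mat n V" and W: "unitary_mat n W" and QV: "Q = V * S * adjoint_mat W"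
    and smono: "\<And>i j. i \<le> j \<Longrightarrow> j < n \<Longrightarrow> sig j \<le> sig i" and spos: "\<And>i. i < n \<Longrightarrow> sig i \<ge> 0"
    using svd unfolding ordered_svd_def S_def Q_def by auto
  have Uc: "U \<in> carrier_mat n n" "adjoint_mat U \<in> carrier_mat n n"
    using U unitary_carrier unitary_adjoint by blast+
  have Vc: "V \<in> carrier_mat n n" "adjoint_mat V \<in> carrier_mat n n"
    using V unitary_carrier unitary_adjoint by blast+
  have Wc: "W \<in> carrier_mat n n" "adjoint_mat W \<in> carrier_mat n n"
    using W unitary_carrier unitary_adjoint by blast+
  have Lc: "L \<in> carrier_mat n n" and Sc: "S \<in> carrier_mat n n" and Src: "Sr \<in> carrier_mat n n"
    unfolding L_def S_def Sr_def by auto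
  have Qc: "Q \<in> carrier_mat n n" unfolding Q_def using Qs Hc by simp
  have h0: "h \<ge> 0" unfolding h_def by (rule spec_norm_nonneg[OF Hc n0])
  have hH: "\<And>x. x \<in> carrier_vec n \<Longrightarrow> vnorm (H *\<^sub>v x) \<le> h * vnorm x"
    unfolding h_def by (rule spec_norm_vec[OF Hc])
  have Qx: "\<And>x. x \<in> carrier_vec n \<Longrightarrow> Q *\<^sub>v x = Qs *\<^sub>v x + H *\<^sub>v x"
    unfolding Q_def by (rule add_mult_distrib_mat_vec[OF Qs Hc])
  have Qs_ap: "\<And>x. x \<in> carrier_vec n \<Longrightarrow> Qs *\<^sub>v x = U *\<^sub>v (L *\<^sub>v (adjoint_mat U *\<^sub>v x))"
    unfolding QsU using Uc Lc by (intro three_apply, auto)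
  have Q_ap: "\<And>x. x \<in> carrier_vec n \<Longrightarrow> Q *\<^sub>v x = V *\<^sub>v (S *\<^sub>v (adjoint_mat W *\<^sub>v x))"
    unfolding QV using Vc Wc Sc by (intro three_apply, auto)
  have Qs_n: "\<And>x. x \<in> carrier_vec n \<Longrightarrow> vnorm (Qs *\<^sub>v x) = vnorm (L *\<^sub>v (adjoint_mat U *\<^sub>v x))"
    using Qs_ap Uc Lc by (simp add: unitary_norm[OF U])
  have Q_n: "\<And>x. x \<in> carrier_vec n \<Longrightarrow> vnorm (Q *\<^sub>v x) = vnorm (S *\<^sub>v (adjoint_mat W *\<^sub>v x))"
    using Q_ap Wc Sc by (simp add: unitary_norm[OF V])
  have Lv: "\<And>b. b \<in> carrier_vec n \<Longrightarrow> L *\<^sub>v b = vec n (\<lambda>k. complex_of_real (lam (k+1)) * b $ k)"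
    unfolding L_def by (rule diag_mult_vec)
  have Sv: "\<And>b. b \<in> carrier_vec n \<Longrightarrow> S *\<^sub>v b = vec n (\<lambda>k. complex_of_real (sig k) * b $ k)"
    unfolding S_def by (rule diag_mult_vec)
  have Srv: "\<And>b. b \<in> carrier_vec n \<Longrightarrow> Sr *\<^sub>v b = vec n (\<lambda>k. (if k < r then complex_of_real (sig k) else 0) * b $ k)"
    unfolding Sr_def by (rule diag_mult_vec)
  have adjQs: "adjoint_mat Qs = Qs" unfolding QsU
    by (subst adj_triple[OF Uc(1) Lc Uc(2)], simp add: L_def adjoint_diag_real)
  have adjH: "adjoint_mat H = H" using herm unfolding hermitian_mat_def by simp
  have "adjoint_mat Q = Q" unfolding Q_def using adjQs adjH adjoint_add[OF Qs Hc] by simp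
  hence QV2: "Q = W * S * adjoint_mat V" unfolding QV
    by (subst (asm) adj_triple[OF Vc(1) Sc Wc(2)], simp add: S_def adjoint_diag_real)
  have Q_ap2: "\<And>x. x \<in> carrier_vec n \<Longrightarrow> Q *\<^sub>v x = W *\<^sub>v (S *\<^sub>v (adjoint_mat V *\<^sub>v x))"
    unfolding QV2 using Vc Wc Sc by (intro three_apply, auto)
  have sigUp0: "sig r \<le> lam (r+1) + h" if rn': "r < n"
  proof -
    obtain a where a: "a \<in> carrier_vec n" "a \<noteq> 0\<^sub>v n" and asupp: "\<forall>k. r+1 \<le> k \<longrightarrow> k < n \<longrightarrow> a $ k = 0"
      and aker: "\<forall>k<r. ((adjoint_mat U * W) *\<^sub>v a) $ k = 0"
      using exists_kernel[of "adjoint_mat U * W" n r "r+1"] Uc Wc rn' by auto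
    define x where "x = W *\<^sub>v a"
    have x: "x \<in> carrier_vec n" unfolding x_def using Wc a by simp
    define b where "b = adjoint_mat U *\<^sub>v x"
    have b: "b \<in> carrier_vec n" unfolding b_def using Uc x by simp
    have bB: "b = (adjoint_mat U * W) *\<^sub>v a" unfolding b_def x_def using Uc Wc a by simp
    have vx: "vnorm x = vnorm a" unfolding x_def by (rule unitary_norm[OF W a(1)])
    have vb: "vnorm b = vnorm x" unfolding b_def by (rule unitary_norm_adj[OF U x])
    have "vnorm a \<noteq> 0" using a vnorm_eq_0_iff[of a] by auto
    hence va: "vnorm a > 0" using vnorm_nonneg[of a] by linarith
    have "vnorm (Q *\<^sub>v x) = vnorm (S *\<^sub>v a)" using Q_n[OF x] unfolding x_def
      using unitary_inv1[OF W a(1)] by simp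
    also have "sig r * vnorm a \<le> vnorm (S *\<^sub>v a)"
    proof (rule vnorm_ge_pointwise)
      fix k assume k: "k < dim_vec a"
      hence kn: "k < n" using a by simp
      show "sig r * cmod (a $ k) \<le> cmod ((S *\<^sub>v a) $ k)"
      proof (cases "k \<le> r")
        case True
        have "sig r \<le> sig k" using smono[OF True rn'] .
        thus ?thesis using Sv[OF a(1)] kn spos[OF kn] by (simp add: norm_mult mult_right_mono)
      next
        case False
        thus ?thesis using asupp kn Sv[OF a(1)] by simp
      qed
    qed (insert a Sc spos rn', auto)
    moreover have "vnorm (Q *\<^sub>v x) \<le> vnorm (Qs *\<^sub>v x) + vnorm (H *\<^sub>v x)"
      unfolding Qx[OF x] using Qs Hc by (intro vnorm_add, simp)
    moreover have "vnorm (Qs *\<^sub>v x) \<le> lam (r+1) * vnorm b"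
      unfolding Qs_n[OF x] b_def[symmetric]
    proof (rule vnorm_le_pointwise)
      fix k assume k: "k < dim_vec b"
      hence kn: "k < n" using b by simp
      show "cmod ((L *\<^sub>v b) $ k) \<le> lam (r+1) * cmod (b $ k)"
      proof (cases "k < r")
        case True
        hence "b $ k = 0" using aker bB by simp
        thus ?thesis using Lv[OF b] kn by simp
      next
        case False
        hence "lam (k+1) \<le> lam (r+1)" by (intro lmono, auto)
        thus ?thesis using Lv[OF b] kn lpos[of "k+1"] by (simp add: norm_mult mult_right_mono)
      qed
    qed (insert b Lc lpos, auto)
    moreover have "vnorm (H *\<^sub>v x) \<le> h * vnorm x" by (rule hH[OF x])
    ultimately have "sig r * vnorm a \<le> (lam (r+1) + h) * vnorm a" using vx vb by (simp add: algebra_simps)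
    thus ?thesis using va by simp
  qed
  have sigUp: "sig k \<le> lam (r+1) + h" if "r \<le> k" "k < n" for k
    using sigUp0[of] smono[OF that] that by fastforce
  have sigLow: "lam r - h \<le> sig (r-1)"
  proof -
    obtain b where b: "b \<in> carrier_vec n" "b \<noteq> 0\<^sub>v n" and bsupp: "\<forall>k. r \<le> k \<longrightarrow> k < n \<longrightarrow> b $ k = 0"
      and bker: "\<forall>k<r-1. ((adjoint_mat W * U) *\<^sub>v b) $ k = 0"
      using exists_kernel[of "adjoint_mat W * U" n "r-1" r] Uc Wc rn r1 by auto
    define x where "x = U *\<^sub>v b"
    have x: "x \<in> carrier_vec n" unfolding x_def using Uc b by simp
    define c where "c = adjoint_mat W *\<^sub>v x"
    have c: "c \<in> carrier_vec n" unfolding c_def using Wc x by simp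
    have cB: "c = (adjoint_mat W * U) *\<^sub>v b" unfolding c_def x_def using Uc Wc b by simp
    have vx: "vnorm x = vnorm b" unfolding x_def by (rule unitary_norm[OF U b(1)])
    have vc: "vnorm c = vnorm x" unfolding c_def by (rule unitary_norm_adj[OF W x])
    have "vnorm b \<noteq> 0" using b vnorm_eq_0_iff[of b] by auto
    hence vb: "vnorm b > 0" using vnorm_nonneg[of b] by linarith
    have "vnorm (Qs *\<^sub>v x) = vnorm (L *\<^sub>v b)" using Qs_n[OF x] unfolding x_def
      using unitary_inv1[OF U b(1)] by simp
    also have "lam r * vnorm b \<le> vnorm (L *\<^sub>v b)"
    proof (rule vnorm_ge_pointwise)
      fix k assume k: "k < dim_vec b"
      hence kn: "k < n" using b by simp
      show "lam r * cmod (b $ k) \<le> cmod ((L *\<^sub>v b) $ k)"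
      proof (cases "k < r")
        case True
        have "lam r \<le> lam (k+1)" using True by (intro lmono, auto)
        thus ?thesis using Lv[OF b(1)] kn lpos[of "k+1"] by (simp add: norm_mult mult_right_mono)
      next
        case False
        thus ?thesis using bsupp kn Lv[OF b(1)] by simp
      qed
    qed (insert b Lc lpos, auto)
    moreover have "vnorm (Qs *\<^sub>v x) \<le> vnorm (Qs *\<^sub>v x + H *\<^sub>v x) + vnorm (H *\<^sub>v x)"
      using Qs Hc by (intro vnorm_rev, simp)
    moreover have "vnorm (Qs *\<^sub>v x + H *\<^sub>v x) \<le> sig (r-1) * vnorm c"
      unfolding Qx[OF x, symmetric] Q_n[OF x] c_def[symmetric]
    proof (rule vnorm_le_pointwise)
      fix k assume k: "k < dim_vec c"
      hence kn: "k < n" using c by simp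
      show "cmod ((S *\<^sub>v c) $ k) \<le> sig (r-1) * cmod (c $ k)"
      proof (cases "k < r - 1")
        case True
        hence "c $ k = 0" using bker cB by simp
        thus ?thesis using Sv[OF c] kn by simp
      next
        case False
        hence "sig k \<le> sig (r-1)" using kn by (intro smono, auto)
        thus ?thesis using Sv[OF c] kn spos[OF kn] by (simp add: norm_mult mult_right_mono)
      qed
    qed (insert c Sc spos rn r1, auto)
    moreover have "vnorm (H *\<^sub>v x) \<le> h * vnorm x" by (rule hH[OF x])
    ultimately have "lam r * vnorm b \<le> (sig (r-1) + h) * vnorm b" using vx vc by (simp add: algebra_simps)
    thus ?thesis using vb by simp
  qed
  have fin: "finite {\<bar>lam j - lam (j+1)\<bar> | j. 1 \<le> j \<and> j \<le> r - 1}"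
    by (rule finite_subset[of _ "(\<lambda>j. \<bar>lam j - lam (j+1)\<bar>) ` {1..r-1}"], auto)
  have dl: "\<delta> \<le> lam r" unfolding \<delta>_def eig_gap_def by (rule Min_le, insert fin, auto)
  have d0: "\<delta> > 0" unfolding \<delta>_def by (rule gap)
  have l1r: "lam r \<le> lam 1" using r1 by (intro lmono, auto)
  have ratio: "lam 1 / \<delta> \<ge> 1" using dl l1r d0 by simp
  have hX: "h \<le> lam 1 / \<delta> * h" using mult_right_mono[OF ratio h0] by simp
  have QrV: "Qr = V * Sr * adjoint_mat V" unfolding Qr_def Sr_def by (rule trunc_eq[OF Vc(1) Vc(1) rn], simp)
  have Qrc: "Qr \<in> carrier_mat n n" unfolding QrV using Vc Src by (metis mult_carrier_mat)
  have l1: "lam 1 \<ge> 0" by (rule lpos)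
  have QsB: "vnorm (Qs *\<^sub>v x) \<le> lam 1 * vnorm x" if x: "x \<in> carrier_vec n" for x
  proof -
    define d where "d = adjoint_mat U *\<^sub>v x"
    have d: "d \<in> carrier_vec n" unfolding d_def using Uc x by simp
    have "vnorm (Qs *\<^sub>v x) = vnorm (L *\<^sub>v d)" unfolding d_def by (rule Qs_n[OF x])
    also have "\<dots> \<le> lam 1 * vnorm d"
    proof (rule vnorm_le_pointwise)
      fix k assume k: "k < dim_vec d"
      hence kn: "k < n" using d by simp
      have "lam (k+1) \<le> lam 1" by (intro lmono, auto)
      thus "cmod ((L *\<^sub>v d) $ k) \<le> lam 1 * cmod (d $ k)"
        using Lv[OF d] kn lpos[of "k+1"] by (simp add: norm_mult mult_right_mono)
    qed (insert d Lc l1, auto)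
    also have "vnorm d = vnorm x" unfolding d_def by (rule unitary_norm_adj[OF U x])
    finally show ?thesis .
  qed
  show ?thesis
  proof (cases "2 * h < lam r")
    case True
    have eqcols: "W $$ (b,i) = V $$ (b,i)" if i: "i < r" and bn: "b < n" for i b
    proof -
      have iN: "i < n" using i rn by simp
      have "sig (r-1) \<le> sig i" using i rn by (intro smono, auto)
      hence sgi: "sig i > h" using sigLow True by linarith
      define e where "e = (unit_vec n i :: complex vec)"
      have e: "e \<in> carrier_vec n" unfolding e_def by simp
      have Se: "S *\<^sub>v e = complex_of_real (sig i) \<cdot>\<^sub>v e" unfolding S_def e_def by (rule diag_unit[OF iN])
      have QVe: "Q *\<^sub>v (V *\<^sub>v e) = complex_of_real (sig i) \<cdot>\<^sub>v (W *\<^sub>v e)"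
        using Q_ap2[of "V *\<^sub>v e"] Vc e unitary_inv1[OF V e] Se mult_mat_vec[OF Wc(1) e] by simp
      have QWe: "Q *\<^sub>v (W *\<^sub>v e) = complex_of_real (sig i) \<cdot>\<^sub>v (V *\<^sub>v e)"
        using Q_ap[of "W *\<^sub>v e"] Wc e unitary_inv1[OF W e] Se mult_mat_vec[OF Vc(1) e] by simp
      define y where "y = V *\<^sub>v e - W *\<^sub>v e"
      have y: "y \<in> carrier_vec n" unfolding y_def using Vc Wc e by simp
      have Qy: "Q *\<^sub>v y = complex_of_real (sig i) \<cdot>\<^sub>v (W *\<^sub>v e) - complex_of_real (sig i) \<cdot>\<^sub>v (V *\<^sub>v e)"
        unfolding y_def using Vc Wc e by (subst mult_minus_distrib_mat_vec[OF Qc], auto simp: QVe QWe)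
      define z where "z = Qs *\<^sub>v y + complex_of_real (sig i) \<cdot>\<^sub>v y"
      have zH: "z = - (H *\<^sub>v y)"
      proof (rule eq_vecI)
        fix k assume "k < dim_vec (- (H *\<^sub>v y))"
        hence k: "k < n" using Hc by simp
        have "(Q *\<^sub>v y) $ k = (Qs *\<^sub>v y) $ k + (H *\<^sub>v y) $ k" using Qx[OF y] k Hc by simp
        moreover have "(Q *\<^sub>v y) $ k = complex_of_real (sig i) * (W *\<^sub>v e) $ k - complex_of_real (sig i) * (V *\<^sub>v e) $ k"
          using Qy k Vc Wc by simp
        moreover have "y $ k = (V *\<^sub>v e) $ k - (W *\<^sub>v e) $ k" using k Vc Wc unfolding y_def by simp
        ultimately have "(Qs *\<^sub>v y) $ k + complex_of_real (sig i) * y $ k = - (H *\<^sub>v y) $ k"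
          by (rule alg_helper)
        thus "z $ k = (- (H *\<^sub>v y)) $ k" unfolding z_def using k Qs Hc y by simp
      qed (insert Qs Hc y, simp add: z_def)
      define bb where "bb = adjoint_mat U *\<^sub>v y"
      have bb: "bb \<in> carrier_vec n" unfolding bb_def using Uc y by simp
      have Uz: "adjoint_mat U *\<^sub>v z = L *\<^sub>v bb + complex_of_real (sig i) \<cdot>\<^sub>v bb"
      proof -
        have "adjoint_mat U *\<^sub>v z = adjoint_mat U *\<^sub>v (Qs *\<^sub>v y) + adjoint_mat U *\<^sub>v (complex_of_real (sig i) \<cdot>\<^sub>v y)"
          unfolding z_def using Qs y by (intro mult_add_distrib_mat_vec[OF Uc(2)], auto)
        also have "adjoint_mat U *\<^sub>v (Qs *\<^sub>v y) = L *\<^sub>v bb"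
          unfolding Qs_ap[OF y] bb_def using Lc Uc y by (intro unitary_inv1[OF U], auto)
        also have "adjoint_mat U *\<^sub>v (complex_of_real (sig i) \<cdot>\<^sub>v y) = complex_of_real (sig i) \<cdot>\<^sub>v bb"
          unfolding bb_def by (rule mult_mat_vec[OF Uc(2) y])
        finally show ?thesis .
      qed
      have zc: "z \<in> carrier_vec n" unfolding z_def using Qs y by simp
      have "sig i * vnorm bb \<le> vnorm (L *\<^sub>v bb + complex_of_real (sig i) \<cdot>\<^sub>v bb)"
      proof (rule vnorm_ge_pointwise)
        fix k assume k: "k < dim_vec bb"
        hence kn: "k < n" using bb by simp
        have "(L *\<^sub>v bb + complex_of_real (sig i) \<cdot>\<^sub>v bb) $ k = complex_of_real (lam (k+1) + sig i) * bb $ k"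
          using Lv[OF bb] kn bb by (simp add: algebra_simps)
        moreover have "sig i * cmod (bb $ k) \<le> (lam (k+1) + sig i) * cmod (bb $ k)"
          using lpos[of "k+1"] by (simp add: mult_right_mono)
        moreover have "cmod (complex_of_real (lam (k+1) + sig i)) = lam (k+1) + sig i"
          using lpos[of "k+1"] spos[OF iN] by (metis abs_of_nonneg add_nonneg_nonneg norm_of_real)
        ultimately show "sig i * cmod (bb $ k) \<le> cmod ((L *\<^sub>v bb + complex_of_real (sig i) \<cdot>\<^sub>v bb) $ k)"
          by (simp add: norm_mult)
      qed (insert bb Lc spos[OF iN], auto)
      also have "\<dots> = vnorm z" using Uz unitary_norm_adj[OF U zc] by simp
      also have "\<dots> = vnorm (H *\<^sub>v y)" unfolding zH vnorm_uminus ..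
      also have "\<dots> \<le> h * vnorm y" by (rule hH[OF y])
      finally have "sig i * vnorm y \<le> h * vnorm y" using unitary_norm_adj[OF U y] unfolding bb_def by simp
      hence "vnorm y = 0" using sgi vnorm_nonneg[of y]
        by (metis less_eq_real_def linorder_not_le mult_strict_right_mono)
      hence "y = 0\<^sub>v n" using vnorm_eq_0_iff[of y] y by simp
      hence "y $ b = 0" using bn by simp
      hence "(V *\<^sub>v e) $ b = (W *\<^sub>v e) $ b" unfolding y_def using bn Vc Wc by simp
      thus ?thesis unfolding e_def using mat_unit_col[OF Vc(1) iN bn] mat_unit_col[OF Wc(1) iN bn] by simp
    qed
    have QrW: "Qr = V * Sr * adjoint_mat W" unfolding Qr_def Sr_def
      by (rule trunc_eq[OF Vc(1) Wc(1) rn], rule eqcols)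
    have bound: "vnorm ((Qs - Qr) *\<^sub>v x) \<le> lam (r+1) + 2 * h" if x: "x \<in> carrier_vec n" and x1: "vnorm x = 1" for x
    proof -
      define c where "c = adjoint_mat W *\<^sub>v x"
      have c: "c \<in> carrier_vec n" unfolding c_def using Wc x by simp
      have vc: "vnorm c = 1" unfolding c_def using unitary_norm_adj[OF W x] x1 by simp
      have Qrx: "Qr *\<^sub>v x = V *\<^sub>v (Sr *\<^sub>v c)" unfolding QrW c_def using Vc Wc Src x by (intro three_apply, auto)
      have Qxx: "Q *\<^sub>v x = V *\<^sub>v (S *\<^sub>v c)" unfolding c_def by (rule Q_ap[OF x])
      have eqv: "(Qs - Qr) *\<^sub>v x = (V *\<^sub>v (S *\<^sub>v c) - V *\<^sub>v (Sr *\<^sub>v c)) - H *\<^sub>v x"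
      proof (rule eq_vecI)
        fix k assume "k < dim_vec ((V *\<^sub>v (S *\<^sub>v c) - V *\<^sub>v (Sr *\<^sub>v c)) - H *\<^sub>v x)"
        hence k: "k < n" using Hc by simp
        have "(Q *\<^sub>v x) $ k = (Qs *\<^sub>v x) $ k + (H *\<^sub>v x) $ k" using Qx[OF x] k Hc by simp
        thus "((Qs - Qr) *\<^sub>v x) $ k = ((V *\<^sub>v (S *\<^sub>v c) - V *\<^sub>v (Sr *\<^sub>v c)) - H *\<^sub>v x) $ k"
          unfolding minus_mult_distrib_mat_vec[OF Qs Qrc x] using k Qs Qrc Vc Hc Qxx[symmetric] Qrx[symmetric]
          by (simp add: algebra_simps)
      qed (insert Qs Qrc Vc Hc, simp)
      have "vnorm ((Qs - Qr) *\<^sub>v x) \<le> vnorm (V *\<^sub>v (S *\<^sub>v c) - V *\<^sub>v (Sr *\<^sub>v c)) + vnorm (H *\<^sub>v x)"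
        unfolding eqv using Vc Hc by (intro vnorm_diff, simp)
      also have "V *\<^sub>v (S *\<^sub>v c) - V *\<^sub>v (Sr *\<^sub>v c) = V *\<^sub>v (S *\<^sub>v c - Sr *\<^sub>v c)"
        using Sc Src c by (intro mult_minus_distrib_mat_vec[OF Vc(1), symmetric], auto)
      also have "vnorm \<dots> = vnorm (S *\<^sub>v c - Sr *\<^sub>v c)" using Sc Src c by (intro unitary_norm[OF V], simp)
      also have "\<dots> \<le> (lam (r+1) + h) * vnorm c"
      proof (rule vnorm_le_pointwise)
        fix k assume k: "k < dim_vec c"
        hence kn: "k < n" using c by simp
        show "cmod ((S *\<^sub>v c - Sr *\<^sub>v c) $ k) \<le> (lam (r+1) + h) * cmod (c $ k)"
        proof (cases "k < r")
          case True
          thus ?thesis using Sv[OF c] Srv[OF c] kn lpos h0 by simp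
        next
          case False
          hence "sig k \<le> lam (r+1) + h" using sigUp kn by simp
          thus ?thesis using Sv[OF c] Srv[OF c] kn False spos[OF kn] by (simp add: norm_mult mult_right_mono)
        qed
      qed (insert c lpos h0 Sc Src, auto)
      also have "vnorm (H *\<^sub>v x) \<le> h" using hH[OF x] x1 by simp
      finally show ?thesis using vc by simp
    qed
    have "spec_norm (Qs - Qr) \<le> lam (r+1) + 2 * h"
      by (rule spec_norm_le[OF _ n0 bound], insert Qs Qrc, auto)
    also have "\<dots> \<le> 8 * (lam (r+1) + lam 1 / \<delta> * h)" using hX lpos[of "r+1"] h0 by simp
    finally show ?thesis unfolding Qr_def h_def \<delta>_def .
  next
    case False
    have sig0: "sig 0 \<le> lam 1 + h"
    proof -
      define e where "e = (unit_vec n 0 :: complex vec)"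
      have e: "e \<in> carrier_vec n" and ve: "vnorm e = 1" unfolding e_def using vnorm_unit_vec[OF n0] by auto
      define x where "x = W *\<^sub>v e"
      have x: "x \<in> carrier_vec n" unfolding x_def using Wc e by simp
      have vx: "vnorm x = 1" unfolding x_def using unitary_norm[OF W e] ve by simp
      have Se: "S *\<^sub>v e = complex_of_real (sig 0) \<cdot>\<^sub>v e" unfolding S_def e_def by (rule diag_unit[OF n0])
      have "vnorm (Q *\<^sub>v x) = vnorm (S *\<^sub>v e)" using Q_n[OF x] unfolding x_def
        using unitary_inv1[OF W e] by simp
      also have "\<dots> = sig 0" unfolding Se vnorm_smult ve using spos[OF n0] by simp
      finally have "sig 0 = vnorm (Q *\<^sub>v x)" ..
      also have "\<dots> \<le> vnorm (Qs *\<^sub>v x) + vnorm (H *\<^sub>v x)"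
        unfolding Qx[OF x] using Qs Hc by (intro vnorm_add, simp)
      also have "\<dots> \<le> lam 1 + h" using QsB[OF x] hH[OF x] vx by simp
      finally show ?thesis .
    qed
    have bound: "vnorm ((Qs - Qr) *\<^sub>v x) \<le> 2 * lam 1 + h" if x: "x \<in> carrier_vec n" and x1: "vnorm x = 1" for x
    proof -
      define d where "d = adjoint_mat V *\<^sub>v x"
      have d: "d \<in> carrier_vec n" unfolding d_def using Vc x by simp
      have vd: "vnorm d = 1" unfolding d_def using unitary_norm_adj[OF V x] x1 by simp
      have Qrx: "Qr *\<^sub>v x = V *\<^sub>v (Sr *\<^sub>v d)" unfolding QrV d_def using Vc Src x by (intro three_apply, auto)
      have "vnorm ((Qs - Qr) *\<^sub>v x) = vnorm (Qs *\<^sub>v x - Qr *\<^sub>v x)"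
        unfolding minus_mult_distrib_mat_vec[OF Qs Qrc x] ..
      also have "\<dots> \<le> vnorm (Qs *\<^sub>v x) + vnorm (Qr *\<^sub>v x)" using Qs Qrc by (intro vnorm_diff, simp)
      also have "vnorm (Qr *\<^sub>v x) = vnorm (Sr *\<^sub>v d)" unfolding Qrx using Src d by (intro unitary_norm[OF V], simp)
      also have "\<dots> \<le> sig 0 * vnorm d"
      proof (rule vnorm_le_pointwise)
        fix k assume k: "k < dim_vec d"
        hence kn: "k < n" using d by simp
        have "sig k \<le> sig 0" using kn by (intro smono, auto)
        thus "cmod ((Sr *\<^sub>v d) $ k) \<le> sig 0 * cmod (d $ k)"
          using Srv[OF d] kn spos[OF kn] spos[OF n0] by (simp add: norm_mult mult_right_mono)
      qed (insert d spos[OF n0] Src, auto)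
      finally show ?thesis using QsB[OF x] x1 vd sig0 by simp
    qed
    have "spec_norm (Qs - Qr) \<le> 2 * lam 1 + h"
      by (rule spec_norm_le[OF _ n0 bound], insert Qs Qrc, auto)
    also have "\<dots> \<le> 8 * (lam (r+1) + lam 1 / \<delta> * h)"
    proof -
      have "\<delta> / 2 \<le> h" using False dl by simp
      hence "lam 1 / \<delta> * (\<delta> / 2) \<le> lam 1 / \<delta> * h" using l1 d0 by (intro mult_left_mono, auto)
      moreover have "lam 1 / \<delta> * (\<delta> / 2) = lam 1 / 2" using d0 by simp
      ultimately show ?thesis using hX lpos[of "r+1"] h0 by simp
    qed
    finally show ?thesis unfolding Qr_def h_def \<delta>_def .
  qed
qed


theorem lemma12:
  "\<exists>C>0. \<forall>n r (Qs::complex mat) H U lam V sig W.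
     Qs \<in> carrier_mat n n \<longrightarrow> H \<in> carrier_mat n n \<longrightarrow>
     psd_ordered_eigendecomp n Qs U lam \<longrightarrow>
     hermitian_mat H \<longrightarrow>
     ordered_svd n (Qs + H) V sig W \<longrightarrow>
     1 \<le> r \<longrightarrow> r \<le> n \<longrightarrow>
     eig_gap lam r > 0 \<longrightarrow>
     spec_norm (Qs - trunc_rank n r V sig)
       \<le> C * (lam (r+1) + lam 1 / eig_gap lam r * spec_norm H)"
  by (rule exI[of _ 8], simp only: zero_less_numeral simp_thms, intro allI impI core, assumption+)

end
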